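(* For every $\bm r\in\mathbb{Z}^N\setminus\{\bm0\}$, the space of derivations of $\mathcal{H}_N'$ of degree $\bm r$ equals $\operatorname{ad}(\mathbb{K}h_{\bm r})$; that is, every derivation $\partial$ of $\mathcal{H}_N'$ with $\partial(\mathbb{K}h_{\bm s})\subseteq\mathbb{K}h_{\bm s+\bm r}$ for all $\bm s\in\mathbb{Z}^N$ is of the form $\operatorname{ad}(c\,h_{\bm r})$ for some $c\in\mathbb{K}$.
   Context: $\mathbb{K}$ is an algebraically closed field of characteristic zero, $N=2m\ge2$ even, $(\cdot,\cdot)$ the bilinear form on $\mathbb{K}^N$ with $(e_i,e_j)=\delta_{ij}$. Let $A_N=\mathbb{K}[t_1^{\pm1},\dots,t_N^{\pm1}]$, $d_i=t_i\frac{\partial}{\partial t_i}$, $t^{\bm r}=t_1^{r_1}\cdots t_N^{r_N}$, $D(u,\bm r)=\sum_i u_it^{\bm r}d_i$. Let $\bm J=\begin{pmatrix} O_m & I_m\\ -I_m & O_m\end{pmatrix}$, $\overline{\bm r}=\bm J\bm r$, $h_{\bm r}=D(\overline{\bm r},\bm r)$ (so $h_{\bm0}=0$). $\mathcal{H}_N'=\operatorname{span}_{\mathbb{K}}\{h_{\bm r}:\bm r\in\mathbb{Z}^N\setminus\{\bm0\}\}$ is the Lie algebra with bracket $[h_{\bm r},h_{\bm s}]=(\overline{\bm r},\bm s)h_{\bm r+\bm s}$, $\mathbb{Z}^N$-graded with degree-$\bm s$ component $\mathbb{K}h_{\bm s}$. *)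

theory Defs
  imports "HOL-Computational_Algebra.Polynomial"
begin

(* Lattice Z^N, N = 2m, modelled as functions nat => int vanishing from index N on. *)
definition Zvec :: "nat \<Rightarrow> (nat \<Rightarrow> int) set" where
  "Zvec N = {r. \<forall>i\<ge>N. r i = 0}"

definition vzero :: "nat \<Rightarrow> int" where "vzero = (\<lambda>_. 0)"

definition vadd :: "(nat \<Rightarrow> int) \<Rightarrow> (nat \<Rightarrow> int) \<Rightarrow> (nat \<Rightarrow> int)" where
  "vadd r s = (\<lambda>i. r i + s i)"

(* J r = rbar with J = [[0, I_m], [-I_m, 0]]:  (J r)_i = r_(i+m) for i<m, -r_(i-m) for m<=i<2m *)
definition Jmat :: "nat \<Rightarrow> (nat \<Rightarrow> int) \<Rightarrow> (nat \<Rightarrow> int)" where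
  "Jmat m r = (\<lambda>i. if i < m then r (i + m) else if i < 2*m then - r (i - m) else 0)"

definition form :: "nat \<Rightarrow> (nat \<Rightarrow> int) \<Rightarrow> (nat \<Rightarrow> int) \<Rightarrow> int" where
  "form N r s = (\<Sum>i<N. r i * s i)"

(* elements of H_N' : finitely supported K-valued functions on Z^N \ {0}
   (coefficient of x at r is the coefficient of h_r) *)
definition Hcar :: "nat \<Rightarrow> ((nat \<Rightarrow> int) \<Rightarrow> 'k::field) set" where
  "Hcar m = {x. finite {r. x r \<noteq> 0} \<and> (\<forall>r. x r \<noteq> 0 \<longrightarrow> r \<in> Zvec (2*m) \<and> r \<noteq> vzero)}"

definition supp :: "((nat \<Rightarrow> int) \<Rightarrow> 'k::field) \<Rightarrow> (nat \<Rightarrow> int) set" where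
  "supp x = {r. x r \<noteq> 0}"

(* basis element h_s (h_0 = 0) *)
definition hb :: "(nat \<Rightarrow> int) \<Rightarrow> ((nat \<Rightarrow> int) \<Rightarrow> 'k::field)" where
  "hb s = (\<lambda>t. if t = s \<and> s \<noteq> vzero then 1 else 0)"

definition smul :: "'k::field \<Rightarrow> ((nat \<Rightarrow> int) \<Rightarrow> 'k) \<Rightarrow> ((nat \<Rightarrow> int) \<Rightarrow> 'k)" where
  "smul c x = (\<lambda>t. c * x t)"

definition hadd :: "((nat \<Rightarrow> int) \<Rightarrow> 'k::field) \<Rightarrow> ((nat \<Rightarrow> int) \<Rightarrow> 'k) \<Rightarrow> ((nat \<Rightarrow> int) \<Rightarrow> 'k)" where
  "hadd x y = (\<lambda>t. x t + y t)"

(* bracket [h_r, h_s] = (rbar, s) h_(r+s), extended bilinearly *)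
definition hbr :: "nat \<Rightarrow> ((nat \<Rightarrow> int) \<Rightarrow> 'k::field) \<Rightarrow> ((nat \<Rightarrow> int) \<Rightarrow> 'k) \<Rightarrow> ((nat \<Rightarrow> int) \<Rightarrow> 'k)" where
  "hbr m x y = (\<lambda>t. if t = vzero then 0 else
      (\<Sum>r\<in>supp x. \<Sum>s\<in>supp y.
          if vadd r s = t then x r * y s * of_int (form (2*m) (Jmat m r) s) else 0))"

definition is_derivation :: "nat \<Rightarrow> (((nat \<Rightarrow> int) \<Rightarrow> 'k::field) \<Rightarrow> ((nat \<Rightarrow> int) \<Rightarrow> 'k)) \<Rightarrow> bool" where
  "is_derivation m D \<longleftrightarrow>
     (\<forall>x\<in>Hcar m. D x \<in> Hcar m) \<and>
     (\<forall>x\<in>Hcar m. \<forall>y\<in>Hcar m. D (hadd x y) = hadd (D x) (D y)) \<and>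
     (\<forall>c. \<forall>x\<in>Hcar m. D (smul c x) = smul c (D x)) \<and>
     (\<forall>x\<in>Hcar m. \<forall>y\<in>Hcar m. D (hbr m x y) = hadd (hbr m (D x) y) (hbr m x (D y)))"

definition alg_closed :: "'k::field itself \<Rightarrow> bool" where
  "alg_closed _ \<longleftrightarrow> (\<forall>p :: 'k poly. degree p > 0 \<longrightarrow> (\<exists>z. poly p z = 0))"

end

theory Submission
  imports Defs
begin


definition sp :: "nat \<Rightarrow> (nat \<Rightarrow> int) \<Rightarrow> (nat \<Rightarrow> int) \<Rightarrow> int" where
  "sp m x y = (\<Sum>j<m. x (j+m) * y j - x j * y (j+m))"

definition vneg :: "(nat \<Rightarrow> int) \<Rightarrow> (nat \<Rightarrow> int)" where
  "vneg x = (\<lambda>i. - x i)"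

lemma form_J: "form (2*m) (Jmat m x) y = sp m x y"
proof -
  have U: "{..<2*m} = {..<m} \<union> (\<lambda>j. j+m) ` {..<m}"
  proof (rule set_eqI, rule iffI)
    fix i assume "i \<in> {..<2*m}"
    then show "i \<in> {..<m} \<union> (\<lambda>j. j+m) ` {..<m}"
      by (cases "i < m") (auto intro!: image_eqI[of i _ "i - m"])
  qed auto
  have "form (2*m) (Jmat m x) y = (\<Sum>i<m. Jmat m x i * y i) + (\<Sum>i\<in>(\<lambda>j. j+m) ` {..<m}. Jmat m x i * y i)"
    unfolding form_def U by (rule sum.union_disjoint) auto
  also have "\<dots> = (\<Sum>i<m. x (i+m) * y i) + (\<Sum>j<m. - x j * y (j+m))"
    by (subst sum.reindex) (auto simp: inj_on_def Jmat_def)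
  finally show ?thesis by (simp add: sp_def sum_subtractf sum_negf)
qed

lemma sp_add_left: "sp m (vadd x y) z = sp m x z + sp m y z"
  by (simp add: sp_def vadd_def sum.distrib[symmetric] algebra_simps)
lemma sp_add_right: "sp m z (vadd x y) = sp m z x + sp m z y"
  by (simp add: sp_def vadd_def sum.distrib[symmetric] algebra_simps)
lemma sp_neg_left: "sp m (vneg x) z = - sp m x z"
  by (simp add: sp_def vneg_def sum_negf[symmetric] algebra_simps)
lemma sp_neg_right: "sp m z (vneg x) = - sp m z x"
  by (simp add: sp_def vneg_def sum_negf[symmetric] algebra_simps)
lemma sp_anti: "sp m x y = - sp m y x"
  by (simp add: sp_def sum_negf[symmetric] algebra_simps)
lemma sp_self[simp]: "sp m x x = 0"
  using sp_anti[of m x x] by simp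
lemma sp_zero_left[simp]: "sp m vzero y = 0"
  by (simp add: sp_def vzero_def)
lemma sp_zero_right[simp]: "sp m y vzero = 0"
  by (simp add: sp_def vzero_def)

lemma Zvec_add: "x \<in> Zvec N \<Longrightarrow> y \<in> Zvec N \<Longrightarrow> vadd x y \<in> Zvec N"
  by (simp add: Zvec_def vadd_def)
lemma Zvec_neg: "x \<in> Zvec N \<Longrightarrow> vneg x \<in> Zvec N"
  by (simp add: Zvec_def vneg_def)
lemma Zvec_J: "Jmat m x \<in> Zvec (2*m)"
  by (simp add: Zvec_def Jmat_def)

lemma sq_pos: "(a::int) \<noteq> 0 \<Longrightarrow> 0 < a * a"
  by (auto simp add: zero_less_mult_iff linorder_neq_iff)

lemma nondeg:
  assumes "x \<in> Zvec (2*m)" "x \<noteq> vzero"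
  shows "sp m x (Jmat m x) > 0"
proof -
  have "\<exists>i<2*m. x i \<noteq> 0"
  proof (rule ccontr)
    assume "\<not> (\<exists>i<2*m. x i \<noteq> 0)"
    hence "x i = 0" for i using assms(1) unfolding Zvec_def by (cases "i < 2*m") auto
    hence "x = vzero" unfolding vzero_def by (intro ext) simp
    with assms(2) show False by contradiction
  qed
  then obtain i where i: "i < 2*m" "x i \<noteq> 0" by blast
  have eq: "sp m x (Jmat m x) = (\<Sum>j<m. x (j+m) * x (j+m) + x j * x j)"
    by (simp add: sp_def Jmat_def)
  define j where "j = (if i < m then i else i - m)"
  have j: "j < m" using i by (auto simp: j_def)
  have "x j \<noteq> 0 \<or> x (j+m) \<noteq> 0" using i by (cases "i < m") (simp_all add: j_def)
  hence pos: "x (j+m) * x (j+m) + x j * x j > 0"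
  proof
    assume "x j \<noteq> 0" then have "0 < x j * x j" by (rule sq_pos)
    moreover have "0 \<le> x (j+m) * x (j+m)" by simp
    ultimately show ?thesis by linarith
  next
    assume "x (j+m) \<noteq> 0" then have "0 < x (j+m) * x (j+m)" by (rule sq_pos)
    moreover have "0 \<le> x j * x j" by simp
    ultimately show ?thesis by linarith
  qed
  have "x (j+m) * x (j+m) + x j * x j \<le> (\<Sum>j<m. x (j+m) * x (j+m) + x j * x j)"
    by (rule member_le_sum) (use j in auto)
  with pos eq show ?thesis by linarith
qed


lemma hbr_superset:
  assumes "finite A" "supp x \<subseteq> A" "finite B" "supp y \<subseteq> B"
  shows "hbr m x y = (\<lambda>t. if t = vzero then 0 else
      (\<Sum>r\<in>A. \<Sum>s\<in>B. if vadd r s = t then x r * y s * of_int (form (2*m) (Jmat m r) s) else 0))"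
proof -
  have e1: "(\<Sum>s\<in>supp y. if vadd r s = t then x r * y s * of_int (form (2*m) (Jmat m r) s) else 0)
      = (\<Sum>s\<in>B. if vadd r s = t then x r * y s * of_int (form (2*m) (Jmat m r) s) else 0)" for r t
    by (rule sum.mono_neutral_left) (use assms in \<open>auto simp: supp_def\<close>)
  have e2: "(\<Sum>r\<in>supp x. \<Sum>s\<in>B. if vadd r s = t then x r * y s * of_int (form (2*m) (Jmat m r) s) else 0)
      = (\<Sum>r\<in>A. \<Sum>s\<in>B. if vadd r s = t then x r * y s * of_int (form (2*m) (Jmat m r) s) else 0)" for t
    apply (rule sum.mono_neutral_left)
    subgoal using assms by simp
    subgoal using assms by simp
    subgoal by (intro ballI sum.neutral) (auto simp: supp_def)
    done
  show ?thesis unfolding hbr_def e1 e2 by (rule refl)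
qed

lemma supp_smul_hb: "supp (smul a (hb s)) \<subseteq> {s}"
  by (auto simp: supp_def smul_def hb_def)

lemma sum_sing: "(\<Sum>x\<in>{a}. f x) = f a" by simp

lemma hbr_hb_hb:
  "hbr m (smul a (hb s)) (smul b (hb t)) = smul (a * b * of_int (sp m s t)) (hb (vadd s t))"
proof -
  have "hbr m (smul a (hb s)) (smul b (hb t)) = (\<lambda>u. if u = vzero then 0 else
      (\<Sum>r\<in>{s}. \<Sum>s'\<in>{t}. if vadd r s' = u then smul a (hb s) r * smul b (hb t) s' * of_int (form (2*m) (Jmat m r) s') else 0))"
    by (rule hbr_superset) (auto simp: supp_smul_hb)
  also have "\<dots> = smul (a * b * of_int (sp m s t)) (hb (vadd s t))"
  proof (rule ext)
    fix u
    show "(if u = vzero then 0 else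
      (\<Sum>r\<in>{s}. \<Sum>s'\<in>{t}. if vadd r s' = u then smul a (hb s) r * smul b (hb t) s' * of_int (form (2*m) (Jmat m r) s') else 0))
      = smul (a * b * of_int (sp m s t)) (hb (vadd s t)) u"
    proof (cases "u = vzero")
      case True then show ?thesis by (auto simp: smul_def hb_def)
    next
      case False
      have h1: "smul a (hb s) s = (if s = vzero then 0 else a)" by (simp add: smul_def hb_def)
      have h2: "smul b (hb t) t = (if t = vzero then 0 else b)" by (simp add: smul_def hb_def)
      show ?thesis
      proof (cases "vadd s t = u")
        case True
        then show ?thesis using False
          by (simp only: sum_sing h1 h2 form_J if_False if_True) (simp add: smul_def hb_def)
      next
        case F2: False
        then show ?thesis using False
          by (simp only: sum_sing if_False) (auto simp add: smul_def hb_def)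
      qed
    qed
  qed
  finally show ?thesis .
qed

lemma smul_one: "smul 1 x = x" by (simp add: smul_def)

lemma hbr_hb_hb1:
  "hbr m (hb s) (hb t) = smul (of_int (sp m s t)) (hb (vadd s t))"
  using hbr_hb_hb[of m 1 s 1 t] by (simp add: smul_one)

lemma supp_hadd: "supp (hadd x y) \<subseteq> supp x \<union> supp y"
  by (auto simp: supp_def hadd_def)
lemma supp_smul: "supp (smul a x) \<subseteq> supp x"
  by (auto simp: supp_def smul_def)

lemma hbr_hadd_right:
  assumes "finite (supp z)" "finite (supp x)" "finite (supp y)"
  shows "hbr m z (hadd x y) = hadd (hbr m z x) (hbr m z y)"
proof -
  let ?B = "supp x \<union> supp y"
  have f: "finite ?B" using assms by auto
  have 1: "hbr m z (hadd x y) = (\<lambda>t. if t = vzero then 0 else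
      (\<Sum>r\<in>supp z. \<Sum>s\<in>?B. if vadd r s = t then z r * hadd x y s * of_int (form (2*m) (Jmat m r) s) else 0))"
    by (rule hbr_superset) (use assms f supp_hadd in auto)
  have 2: "hbr m z x = (\<lambda>t. if t = vzero then 0 else
      (\<Sum>r\<in>supp z. \<Sum>s\<in>?B. if vadd r s = t then z r * x s * of_int (form (2*m) (Jmat m r) s) else 0))"
    by (rule hbr_superset) (use assms f in auto)
  have 3: "hbr m z y = (\<lambda>t. if t = vzero then 0 else
      (\<Sum>r\<in>supp z. \<Sum>s\<in>?B. if vadd r s = t then z r * y s * of_int (form (2*m) (Jmat m r) s) else 0))"
    by (rule hbr_superset) (use assms f in auto)
  show ?thesis unfolding 1 2 3
    by (rule ext) (simp add: hadd_def sum.distrib[symmetric] algebra_simps if_distrib cong: if_cong)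
qed

lemma hbr_zero_right: "hbr m z (\<lambda>_. 0) = (\<lambda>_. 0)"
  by (rule ext) (simp add: hbr_def supp_def)

lemma hbr_smul_right:
  assumes "finite (supp z)" "finite (supp x)"
  shows "hbr m z (smul a x) = smul a (hbr m z x)"
proof (cases "a = 0")
  case True
  have "smul a x = (\<lambda>_. 0)" by (simp add: True smul_def fun_eq_iff)
  then show ?thesis by (simp add: hbr_zero_right) (simp add: smul_def True fun_eq_iff)
next
  case False
  have "supp (smul a x) = supp x" using False by (auto simp: supp_def smul_def)
  then show ?thesis unfolding hbr_def
    by (intro ext) (simp add: smul_def sum_distrib_left algebra_simps if_distrib cong: if_cong)
qed

lemma Hcar_finite: "x \<in> Hcar m \<Longrightarrow> finite (supp x)"
  by (simp add: Hcar_def supp_def)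
lemma Hcar_zero: "(\<lambda>_. 0) \<in> Hcar m"
  by (simp add: Hcar_def)
lemma Hcar_hb: "s \<in> Zvec (2*m) \<Longrightarrow> hb s \<in> Hcar m"
  by (simp add: Hcar_def hb_def)
lemma Hcar_smul: "x \<in> Hcar m \<Longrightarrow> smul a x \<in> Hcar m"
  unfolding Hcar_def smul_def by (auto elim: rev_finite_subset)
lemma Hcar_hadd: "x \<in> Hcar m \<Longrightarrow> y \<in> Hcar m \<Longrightarrow> hadd x y \<in> Hcar m"
proof -
  assume a: "x \<in> Hcar m" "y \<in> Hcar m"
  have sub: "{r. hadd x y r \<noteq> 0} \<subseteq> {r. x r \<noteq> 0} \<union> {r. y r \<noteq> 0}" by (auto simp: hadd_def)
  have fin: "finite {r. hadd x y r \<noteq> 0}"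
    by (rule finite_subset[OF sub]) (use a in \<open>auto simp: Hcar_def\<close>)
  have "r \<in> Zvec (2*m) \<and> r \<noteq> vzero" if "hadd x y r \<noteq> 0" for r
  proof -
    have "x r \<noteq> 0 \<or> y r \<noteq> 0" using that by (auto simp: hadd_def)
    then show ?thesis using a unfolding Hcar_def by blast
  qed
  then show ?thesis using fin unfolding Hcar_def by blast
qed

lemma Hcar_induct:
  fixes P :: "((nat \<Rightarrow> int) \<Rightarrow> 'k::field) \<Rightarrow> bool"
  assumes "P (\<lambda>_. 0)"
    and "\<And>x s a. x \<in> Hcar m \<Longrightarrow> s \<in> Zvec (2*m) \<Longrightarrow> P x \<Longrightarrow> P (hadd (smul a (hb s)) x)"
  shows "x \<in> Hcar m \<Longrightarrow> P x"
proof -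
  have "\<forall>x::(nat \<Rightarrow> int) \<Rightarrow> 'k. x \<in> Hcar m \<longrightarrow> supp x = F \<longrightarrow> P x" if "finite F" for F
    using that
  proof (induction F rule: finite_induct)
    case empty
    then show ?case using assms(1) by (auto simp: supp_def)
  next
    case (insert s F)
    show ?case
    proof (intro allI impI)
      fix x :: "(nat \<Rightarrow> int) \<Rightarrow> 'k" assume x: "x \<in> Hcar m" "supp x = insert s F"
      define x' where "x' = x(s := 0)"
      have sx: "x s \<noteq> 0" using x by (auto simp: supp_def)
      hence sZ: "s \<in> Zvec (2*m)" "s \<noteq> vzero" using x by (auto simp: Hcar_def)
      have x'H: "x' \<in> Hcar m" using x unfolding Hcar_def x'_def by (auto elim: rev_finite_subset)
      have "supp x' = F" using x insert by (auto simp: supp_def x'_def)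
      hence "P x'" using insert x'H by blast
      moreover have "x = hadd (smul (x s) (hb s)) x'"
        using sZ by (auto simp: hadd_def smul_def hb_def x'_def)
      ultimately show "P x" using assms(2)[OF x'H sZ(1)] by metis
    qed
  qed
  then show "x \<in> Hcar m \<Longrightarrow> P x" by (metis Hcar_finite)
qed


lemma vadd_comm: "vadd x y = vadd y x" by (auto simp: vadd_def)
lemma vadd_assoc: "vadd (vadd x y) z = vadd x (vadd y z)" by (auto simp: vadd_def)
lemma vadd_neg: "vadd x (vneg x) = vzero" by (auto simp: vadd_def vneg_def vzero_def)
lemma vadd_zero: "vadd vzero x = x" "vadd x vzero = x" by (auto simp: vadd_def vzero_def)
lemma vadd_self_zero: "vadd v v = vzero \<Longrightarrow> v = vzero"
  unfolding vadd_def vzero_def by (auto simp: fun_eq_iff)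

lemma combin:
  fixes cc :: "(nat \<Rightarrow> int) \<Rightarrow> 'k::field_char_0"
  assumes rZ: "r \<in> Zvec (2*m)" and r0: "r \<noteq> vzero" and cc0: "cc vzero = 0"
    and E: "\<And>s t. s \<in> Zvec (2*m) \<Longrightarrow> t \<in> Zvec (2*m) \<Longrightarrow> vadd (vadd s t) r \<noteq> vzero \<Longrightarrow>
      of_int (sp m s t) * cc (vadd s t) = cc s * of_int (sp m (vadd s r) t) + cc t * of_int (sp m s (vadd t r))"
  shows "\<exists>l. \<forall>s\<in>Zvec (2*m). vadd s r \<noteq> vzero \<longrightarrow> cc s = l * of_int (sp m r s)"
proof -
  define A where "A = (\<lambda>v. of_int (sp m r v) :: 'k)"
  define P where "P = (\<lambda>u v. of_int (sp m u v) :: 'k)"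
  have A_add: "A (vadd u v) = A u + A v" for u v by (simp add: A_def sp_add_right)
  have A_neg: "A (vneg u) = - A u" for u by (simp add: A_def sp_neg_right)
  have A_r: "A r = 0" by (simp add: A_def)
  have A_z: "A vzero = 0" by (simp add: A_def)
  have P_r: "P u r = - A u" for u by (simp add: A_def P_def sp_anti[of m u r])
  have P_addl: "P (vadd u v) w = P u w + P v w" for u v w by (simp add: P_def sp_add_left)
  have P_addr: "P w (vadd u v) = P w u + P w v" for u v w by (simp add: P_def sp_add_right)
  have P_negr: "P w (vneg u) = - P w u" for u w by (simp add: P_def sp_neg_right)
  have P_negl: "P (vneg u) w = - P u w" for u w by (simp add: P_def sp_neg_left)
  have P_self: "P u u = 0" for u by (simp add: P_def)
  have P_rl: "P r u = A u" for u by (simp add: P_def A_def)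
  have nz: "A v \<noteq> 0 \<Longrightarrow> v \<noteq> vzero" for v using A_z by auto
  have E': "P s t * cc (vadd s t) = cc s * (P s t + A t) + cc t * (P s t - A s)"
    if "s \<in> Zvec (2*m)" "t \<in> Zvec (2*m)" "vadd (vadd s t) r \<noteq> vzero" for s t
    using E[OF that] by (simp add: P_def A_def sp_add_left sp_add_right sp_anti[of m s r] algebra_simps)
  define x where "x = Jmat m r"
  have xZ: "x \<in> Zvec (2*m)" by (simp add: x_def Zvec_J)
  have Ax: "A x \<noteq> 0" using nondeg[OF rZ r0] by (simp add: A_def x_def form_J)
  have negxZ: "vneg x \<in> Zvec (2*m)" using xZ by (rule Zvec_neg)
  have s1a: "cc (vneg x) = - cc x"
  proof -
    have "P x (vneg x) * cc (vadd x (vneg x)) = cc x * (P x (vneg x) + A (vneg x)) + cc (vneg x) * (P x (vneg x) - A x)"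
      by (rule E'[OF xZ negxZ]) (simp add: vadd_neg vadd_zero r0)
    hence "A x * (cc x + cc (vneg x)) = 0"
      by (simp add: P_negr P_self A_neg algebra_simps)
    with Ax show ?thesis by (simp add: eq_neg_iff_add_eq_0 add.commute)
  qed
  have nxrZ: "vadd (vneg x) r \<in> Zvec (2*m)" using negxZ rZ by (rule Zvec_add)
  have s1b: "cc (vadd (vneg x) r) = cc (vneg x) + 2 * cc r"
  proof -
    have "A (vadd (vadd (vneg x) r) r) \<noteq> 0" using Ax by (simp add: A_add A_neg A_r)
    hence "P (vneg x) r * cc (vadd (vneg x) r) = cc (vneg x) * (P (vneg x) r + A r) + cc r * (P (vneg x) r - A (vneg x))"
      by (intro E'[OF negxZ rZ] nz)
    hence "A x * cc (vadd (vneg x) r) = A x * (cc (vneg x) + 2 * cc r)"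
      by (simp add: P_r A_neg A_r algebra_simps)
    with Ax show ?thesis by simp
  qed
  have ccr: "cc r = 0"
  proof -
    have e: "vadd x (vadd (vneg x) r) = r" by (simp add: vadd_assoc[symmetric] vadd_neg vadd_zero)
    have "vadd r r \<noteq> vzero" using r0 vadd_self_zero by blast
    hence "P x (vadd (vneg x) r) * cc (vadd x (vadd (vneg x) r)) = cc x * (P x (vadd (vneg x) r) + A (vadd (vneg x) r)) + cc (vadd (vneg x) r) * (P x (vadd (vneg x) r) - A x)"
      by (intro E'[OF xZ nxrZ]) (simp add: e)
    hence "A x * cc r = A x * (2 * cc x + 2 * cc (vadd (vneg x) r))"
      by (simp add: e P_addr P_negr P_self P_r A_add A_neg A_r algebra_simps)
    hence "cc r = 2 * cc x + 2 * cc (vadd (vneg x) r)" using Ax by simp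
    hence "cc r = 4 * cc r" by (simp add: s1a s1b algebra_simps)
    hence "3 * cc r = 0" by simp
    thus ?thesis by simp
  qed
  have s2: "cc (vadd s r) = cc s" if sZ: "s \<in> Zvec (2*m)" and As: "A s \<noteq> 0" for s
  proof -
    have "A (vadd (vadd s r) r) \<noteq> 0" using As by (simp add: A_add A_r)
    hence "P s r * cc (vadd s r) = cc s * (P s r + A r) + cc r * (P s r - A s)"
      by (intro E'[OF sZ rZ] nz)
    hence "A s * cc (vadd s r) = A s * cc s" by (simp add: P_r A_r ccr)
    with As show ?thesis by simp
  qed
  have s3: "cc (vadd s t) = cc s + cc t \<and> A t * cc s = A s * cc t"
    if sZ: "s \<in> Zvec (2*m)" and tZ: "t \<in> Zvec (2*m)" and As: "A s \<noteq> 0" and At: "A t \<noteq> 0"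
      and Ast: "A (vadd s t) \<noteq> 0" for s t
  proof -
    have srZ: "vadd s r \<in> Zvec (2*m)" using sZ rZ by (rule Zvec_add)
    have stZ: "vadd s t \<in> Zvec (2*m)" using sZ tZ by (rule Zvec_add)
    have E1: "P s t * cc (vadd s t) = cc s * (P s t + A t) + cc t * (P s t - A s)"
      using Ast by (intro E'[OF sZ tZ] nz) (simp add: A_add A_r)
    have "P (vadd s r) t * cc (vadd (vadd s r) t) = cc (vadd s r) * (P (vadd s r) t + A t) + cc t * (P (vadd s r) t - A (vadd s r))"
      using Ast by (intro E'[OF srZ tZ] nz) (simp add: A_add A_r)
    moreover have "vadd (vadd s r) t = vadd (vadd s t) r" by (metis vadd_assoc vadd_comm)
    ultimately have E2: "(P s t + A t) * cc (vadd s t) = cc s * (P s t + A t + A t) + cc t * (P s t + A t - A s)"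
      using s2[OF sZ As] s2[OF stZ Ast] by (simp add: P_addl P_rl A_add A_r)
    have d: "(P s t + A t) * cc (vadd s t) - P s t * cc (vadd s t) = (cc s * (P s t + A t + A t) + cc t * (P s t + A t - A s)) - (cc s * (P s t + A t) + cc t * (P s t - A s))"
      using E1 E2 by simp
    have "A t * cc (vadd s t) = A t * (cc s + cc t)"
      using d by (simp add: algebra_simps)
    hence C: "cc (vadd s t) = cc s + cc t" using At by simp
    with E1 show ?thesis by (simp add: algebra_simps)
  qed
  define l where "l = cc x / A x"
  have xxZ: "vadd x x \<in> Zvec (2*m)" using xZ xZ by (rule Zvec_add)
  have Axx: "A (vadd x x) \<noteq> 0" using Ax by (simp add: A_add)
  have ccxx: "cc (vadd x x) = 2 * cc x" using s3[OF xZ xZ Ax Ax Axx] by simp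
  have s4: "cc s = l * A s" if sZ: "s \<in> Zvec (2*m)" and As: "A s \<noteq> 0" for s
  proof (cases "A (vadd s x) = 0")
    case False
    then have "A x * cc s = A s * cc x" using s3[OF sZ xZ As Ax] by simp
    with Ax show ?thesis by (simp add: l_def field_simps)
  next
    case True
    have "A (vadd s (vadd x x)) = A (vadd s x) + A x" by (simp add: A_add algebra_simps)
    hence "A (vadd s (vadd x x)) \<noteq> 0" using True Ax by simp
    then have "A (vadd x x) * cc s = A s * cc (vadd x x)" using s3[OF sZ xxZ As Axx] by simp
    then have "A x * cc s = A s * cc x" by (simp add: ccxx A_add algebra_simps)
    with Ax show ?thesis by (simp add: l_def field_simps)
  qed
  have s5: "cc s = 0" if sZ: "s \<in> Zvec (2*m)" and As: "A s = 0" and sr: "vadd s r \<noteq> vzero" for s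
  proof -
    have srZ: "vadd s r \<in> Zvec (2*m)" using sZ rZ by (rule Zvec_add)
    obtain t where tZ: "t \<in> Zvec (2*m)" and At: "A t \<noteq> 0" and Pt: "P (vadd s r) t \<noteq> 0"
    proof -
      define t1 where "t1 = Jmat m (vadd s r)"
      have t1Z: "t1 \<in> Zvec (2*m)" by (simp add: t1_def Zvec_J)
      have Pt1: "P (vadd s r) t1 \<noteq> 0" using nondeg[OF srZ sr] by (simp add: P_def t1_def)
      show ?thesis
      proof (cases "A t1 = 0")
        case False then show ?thesis using that t1Z Pt1 by blast
      next
        case True
        show ?thesis
        proof (cases "P (vadd s r) x = 0")
          case False then show ?thesis using that xZ Ax by blast
        next
          case True2: True
          have "vadd x t1 \<in> Zvec (2*m)" using xZ t1Z by (rule Zvec_add)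
          moreover have "A (vadd x t1) \<noteq> 0" using True Ax by (simp add: A_add)
          moreover have "P (vadd s r) (vadd x t1) \<noteq> 0" using True2 Pt1 by (simp add: P_addr)
          ultimately show ?thesis using that by blast
        qed
      qed
    qed
    have stZ: "vadd s t \<in> Zvec (2*m)" using sZ tZ by (rule Zvec_add)
    have Ast: "A (vadd s t) \<noteq> 0" using As At by (simp add: A_add)
    have "P s t * cc (vadd s t) = cc s * (P s t + A t) + cc t * (P s t - A s)"
      using Ast by (intro E'[OF sZ tZ] nz) (simp add: A_add A_r)
    moreover have "cc (vadd s t) = cc t" using s4[OF stZ Ast] s4[OF tZ At] As by (simp add: A_add)
    ultimately have "cc s * P (vadd s r) t = 0" using As by (simp add: P_addl P_rl algebra_simps)
    with Pt show ?thesis by simp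
  qed
  show ?thesis
  proof (intro exI ballI impI)
    fix s assume sZ: "s \<in> Zvec (2*m)" and sr: "vadd s r \<noteq> vzero"
    show "cc s = l * of_int (sp m r s)"
      using s4[OF sZ] s5[OF sZ _ sr] by (cases "A s = 0") (auto simp: A_def)
  qed
qed

theorem lemma4p3:
  fixes m :: nat and r :: "nat \<Rightarrow> int"
    and D :: "((nat \<Rightarrow> int) \<Rightarrow> 'k::field_char_0) \<Rightarrow> ((nat \<Rightarrow> int) \<Rightarrow> 'k)"
  assumes "m \<ge> 1"
    and "alg_closed TYPE('k)"
    and "r \<in> Zvec (2*m)" and "r \<noteq> vzero"
    and "is_derivation m D"
    and "\<forall>s\<in>Zvec (2*m). \<exists>c. D (hb s) = smul c (hb (vadd s r))"
  shows "\<exists>c::'k. \<forall>x\<in>Hcar m. D x = hbr m (smul c (hb r)) x"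
proof -
  note rZ = assms(3) and r0 = assms(4)
  have Dadd: "\<And>x y. x \<in> Hcar m \<Longrightarrow> y \<in> Hcar m \<Longrightarrow> D (hadd x y) = hadd (D x) (D y)"
    and Dsmul: "\<And>c x. x \<in> Hcar m \<Longrightarrow> D (smul c x) = smul c (D x)"
    and Dbr: "\<And>x y. x \<in> Hcar m \<Longrightarrow> y \<in> Hcar m \<Longrightarrow> D (hbr m x y) = hadd (hbr m (D x) y) (hbr m x (D y))"
    using assms(5) unfolding is_derivation_def by blast+
  obtain cc where cc: "\<And>s. s \<in> Zvec (2*m) \<Longrightarrow> D (hb s) = smul (cc s) (hb (vadd s r))"
    using assms(6) by metis
  have Dz: "D (\<lambda>_. 0) = (\<lambda>_. 0)"
  proof -
    have "D (smul 0 (\<lambda>_. 0)) = smul 0 (D (\<lambda>_. 0))" by (rule Dsmul[OF Hcar_zero])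
    moreover have "smul 0 (\<lambda>_. 0) = (\<lambda>_. 0::'k)" by (simp add: smul_def)
    ultimately show ?thesis by (simp add: smul_def)
  qed
  have hb0: "hb vzero = (\<lambda>_. 0::'k)" by (simp add: hb_def fun_eq_iff)
  have vzZ: "vzero \<in> Zvec (2*m)" by (simp add: Zvec_def vzero_def)
  have cc0: "cc vzero = 0"
  proof -
    have "(\<lambda>_. 0) = smul (cc vzero) (hb r)"
      using cc[OF vzZ] by (simp add: hb0 Dz vadd_zero)
    from fun_cong[OF this, of r] show ?thesis using r0 by (simp add: smul_def hb_def)
  qed
  have E: "of_int (sp m s t) * cc (vadd s t) = cc s * of_int (sp m (vadd s r) t) + cc t * of_int (sp m s (vadd t r))"
    if sZ: "s \<in> Zvec (2*m)" and tZ: "t \<in> Zvec (2*m)" and u0: "vadd (vadd s t) r \<noteq> vzero" for s t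
  proof -
    have stZ: "vadd s t \<in> Zvec (2*m)" using sZ tZ by (rule Zvec_add)
    have "D (hbr m (hb s) (hb t)) = hadd (hbr m (D (hb s)) (hb t)) (hbr m (hb s) (D (hb t)))"
      by (rule Dbr[OF Hcar_hb[OF sZ] Hcar_hb[OF tZ]])
    also have "D (hbr m (hb s) (hb t)) = smul (of_int (sp m s t)) (smul (cc (vadd s t)) (hb (vadd (vadd s t) r)))"
      by (simp add: hbr_hb_hb1 Dsmul[OF Hcar_hb[OF stZ]] cc[OF stZ])
    also have "hbr m (D (hb s)) (hb t) = smul (cc s * 1 * of_int (sp m (vadd s r) t)) (hb (vadd (vadd s r) t))"
      by (subst hbr_hb_hb[symmetric]) (simp add: cc[OF sZ] smul_one)
    also have "hbr m (hb s) (D (hb t)) = smul (1 * cc t * of_int (sp m s (vadd t r))) (hb (vadd s (vadd t r)))"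
      by (subst hbr_hb_hb[symmetric]) (simp add: cc[OF tZ] smul_one)
    also have "vadd (vadd s r) t = vadd (vadd s t) r" by (metis vadd_assoc vadd_comm)
    also have "vadd s (vadd t r) = vadd (vadd s t) r" by (metis vadd_assoc)
    finally have "smul (of_int (sp m s t)) (smul (cc (vadd s t)) (hb (vadd (vadd s t) r))) =
      hadd (smul (cc s * 1 * of_int (sp m (vadd s r) t)) (hb (vadd (vadd s t) r)))
           (smul (1 * cc t * of_int (sp m s (vadd t r))) (hb (vadd (vadd s t) r)))" .
    from fun_cong[OF this, of "vadd (vadd s t) r"] show ?thesis
      using u0 by (simp add: smul_def hadd_def hb_def algebra_simps)
  qed
  obtain l where l: "\<And>s. s \<in> Zvec (2*m) \<Longrightarrow> vadd s r \<noteq> vzero \<Longrightarrow> cc s = l * of_int (sp m r s)"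
    using combin[OF rZ r0 cc0 E] by blast
  define w where "w = smul l (hb r)"
  have wf: "finite (supp w)" using supp_smul_hb[of l r] unfolding w_def by (rule finite_subset) simp
  have Dhb: "D (hb s) = hbr m w (hb s)" if sZ: "s \<in> Zvec (2*m)" for s
  proof -
    have "hbr m w (hb s) = smul (l * 1 * of_int (sp m r s)) (hb (vadd r s))"
      unfolding w_def by (subst hbr_hb_hb[symmetric]) (simp add: smul_one)
    also have "vadd r s = vadd s r" by (rule vadd_comm)
    finally show ?thesis using cc[OF sZ] l[OF sZ]
      by (cases "vadd s r = vzero") (auto simp: hb0 smul_def)
  qed
  have z: "D (\<lambda>_. 0) = hbr m w (\<lambda>_. 0)" by (simp add: Dz hbr_zero_right)
  have st: "D (hadd (smul a (hb s)) x) = hbr m w (hadd (smul a (hb s)) x)"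
    if xH: "x \<in> Hcar m" and sZ: "s \<in> Zvec (2*m)" and IH: "D x = hbr m w x" for x s a
  proof -
    have hs: "smul a (hb s) \<in> Hcar m" by (rule Hcar_smul[OF Hcar_hb[OF sZ]])
    have "D (hadd (smul a (hb s)) x) = hadd (smul a (hbr m w (hb s))) (hbr m w x)"
      using Dadd[OF hs xH] Dsmul[OF Hcar_hb[OF sZ]] Dhb[OF sZ] IH by simp
    also have "\<dots> = hbr m w (hadd (smul a (hb s)) x)"
      using wf Hcar_finite[OF hs] Hcar_finite[OF xH] Hcar_finite[OF Hcar_hb[OF sZ]]
      by (simp add: hbr_hadd_right hbr_smul_right[OF wf Hcar_finite[OF Hcar_hb[OF sZ]]])
    finally show ?thesis .
  qed
  show ?thesis
  proof (intro exI ballI)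
    fix x :: "(nat \<Rightarrow> int) \<Rightarrow> 'k" assume "x \<in> Hcar m"
    then show "D x = hbr m (smul l (hb r)) x"
      unfolding w_def[symmetric]
      using Hcar_induct[where P="\<lambda>x. D x = hbr m w x", OF z st] by blast
  qed
qed

end
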